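(* Let $\mathcal M=(M,<,+,0,\ldots)$ be a definably complete locally o-minimal expansion of an ordered abelian group. Let $C\subseteq M^m$ be a definable, closed and bounded set, let $s\in M$ with $s>0$, and let $\{f_t:C\to M\}_{0<t<s}$ be a definable family of functions which is pointwise convergent and is a definable family of equi-continuous functions. Then the family $\{f_t\}_{0<t<s}$ is uniformly convergent.
   Context: "Definable" means definable in $\mathcal M$ with parameters. $\mathcal M$ is definably complete if every definable subset of $M$ has a supremum and an infimum in $M\cup\{\pm\infty\}$; it is locally o-minimal if for every definable $X\subseteq M$ and every $a\in M$ there is an open interval $I\ni a$ such that $X\cap I$ is a finite union of points and open intervals. For $x=(x_1,\dots,x_n)\in M^n$, $|x|:=\max_i |x_i|$; $M^n$ carries the product of the order topology. A definable family of functions $\{f_t:C\to M\}_{0<t<s}$ means there is a definable $F:C\times(0,s)\to M$ with $f_t(x)=F(x,t)$. It is a family of equi-continuous functions if for all $\varepsilon>0$ and all $x\in C$ there is $\delta>0$ such that for all $t\in(0,s)$ and all $x'\in C$ with $|x-x'|<\delta$ we have $|F(x,t)-F(x',t)|<\varepsilon$. It is pointwise convergent if for every $\varepsilon>0$ and $x\in C$ there is $s'>0$ with $|f_t(x)-f_{t'}(x)|<\varepsilon$ for all $t,t'\in(0,s')$. It is uniformly convergent if for every $\varepsilon>0$ there is $s'>0$ with $|f_t(x)-f_{t'}(x)|<\varepsilon$ for all $x\in C$ and all $t,t'\in(0,s')$. *)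

theory Defs
  imports Main
begin

text \<open>The ambient ordered abelian group is a type of class linordered_ab_group_add.
  M^n is represented as the set of lists of length n.\<close>

definition tuples :: "nat \<Rightarrow> 'a list set" where
  "tuples n = {xs. length xs = n}"

definition gabs :: "'a::linordered_ab_group_add \<Rightarrow> 'a" where
  "gabs x = max x (- x)"

text \<open>Open interval with endpoints in M \<union> {-inf, +inf} (None = infinite endpoint).\<close>
definition oint :: "'a::linorder option \<Rightarrow> 'a option \<Rightarrow> 'a set" where
  "oint lo hi = {x. (case lo of None \<Rightarrow> True | Some b \<Rightarrow> b < x) \<and>
                    (case hi of None \<Rightarrow> True | Some c \<Rightarrow> x < c)}"

text \<open>A structure on M (van den Dries, Tame Topology, Ch. 1): S n is the collection of
  definable subsets of M^n.  Being an expansion of (M,<,+,0) with definability with parameters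
  means: all singletons, the graph of < and the graph of + are definable.\<close>
definition expansion_structure :: "(nat \<Rightarrow> ('a::linordered_ab_group_add) list set set) \<Rightarrow> bool" where
  "expansion_structure S \<longleftrightarrow>
     (\<forall>n. S n \<subseteq> Pow (tuples n)) \<and>
     (\<forall>n. {} \<in> S n) \<and>
     (\<forall>n A. A \<in> S n \<longrightarrow> tuples n - A \<in> S n) \<and>
     (\<forall>n A B. A \<in> S n \<longrightarrow> B \<in> S n \<longrightarrow> A \<union> B \<in> S n) \<and>
     (\<forall>n A. A \<in> S n \<longrightarrow> {xs @ [y] | xs y. xs \<in> A} \<in> S (Suc n)) \<and>
     (\<forall>n A. A \<in> S n \<longrightarrow> {y # xs | xs y. xs \<in> A} \<in> S (Suc n)) \<and>
     (\<forall>n i j. i < j \<and> j < n \<longrightarrow> {xs \<in> tuples n. xs ! i = xs ! j} \<in> S n) \<and>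
     (\<forall>n A. A \<in> S (Suc n) \<longrightarrow> butlast ` A \<in> S n) \<and>
     (\<forall>a. {[a]} \<in> S 1) \<and>
     {[x, y] | x y. x < y} \<in> S 2 \<and>
     {[x, y, z] | x y z. z = x + y} \<in> S 3"

definition definable1 :: "(nat \<Rightarrow> 'a list set set) \<Rightarrow> 'a set \<Rightarrow> bool" where
  "definable1 S X \<longleftrightarrow> (\<lambda>x. [x]) ` X \<in> S 1"

definition definably_complete :: "(nat \<Rightarrow> ('a::linordered_ab_group_add) list set set) \<Rightarrow> bool" where
  "definably_complete S \<longleftrightarrow>
     (\<forall>X. definable1 S X \<longrightarrow>
        ((X \<noteq> {} \<and> (\<exists>b. \<forall>x\<in>X. x \<le> b)) \<longrightarrow>
            (\<exists>u. (\<forall>x\<in>X. x \<le> u) \<and> (\<forall>b. (\<forall>x\<in>X. x \<le> b) \<longrightarrow> u \<le> b))) \<and>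
        ((X \<noteq> {} \<and> (\<exists>b. \<forall>x\<in>X. b \<le> x)) \<longrightarrow>
            (\<exists>l. (\<forall>x\<in>X. l \<le> x) \<and> (\<forall>b. (\<forall>x\<in>X. b \<le> x) \<longrightarrow> b \<le> l))))"

definition finite_union_points_intervals :: "'a::linorder set \<Rightarrow> bool" where
  "finite_union_points_intervals Y \<longleftrightarrow>
     (\<exists>P Q. finite P \<and> finite Q \<and> Y = P \<union> (\<Union>(lo, hi)\<in>Q. oint lo hi))"

definition locally_o_minimal :: "(nat \<Rightarrow> ('a::linordered_ab_group_add) list set set) \<Rightarrow> bool" where
  "locally_o_minimal S \<longleftrightarrow>
     (\<forall>X a. definable1 S X \<longrightarrow>
        (\<exists>lo hi. a \<in> oint lo hi \<and> finite_union_points_intervals (X \<inter> oint lo hi)))"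

definition open_in_power :: "nat \<Rightarrow> ('a::linorder) list set \<Rightarrow> bool" where
  "open_in_power m U \<longleftrightarrow> U \<subseteq> tuples m \<and>
     (\<forall>x\<in>U. \<exists>lo hi :: nat \<Rightarrow> 'a option.
        (\<forall>i<m. x ! i \<in> oint (lo i) (hi i)) \<and>
        {y \<in> tuples m. \<forall>i<m. y ! i \<in> oint (lo i) (hi i)} \<subseteq> U)"

definition closed_in_power :: "nat \<Rightarrow> ('a::linorder) list set \<Rightarrow> bool" where
  "closed_in_power m C \<longleftrightarrow> C \<subseteq> tuples m \<and> open_in_power m (tuples m - C)"

definition bounded_in_power :: "nat \<Rightarrow> ('a::linordered_ab_group_add) list set \<Rightarrow> bool" where
  "bounded_in_power m C \<longleftrightarrow> (\<exists>B. \<forall>x\<in>C. \<forall>i<m. gabs (x ! i) \<le> B)"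

definition near :: "nat \<Rightarrow> ('a::linordered_ab_group_add) list \<Rightarrow> 'a list \<Rightarrow> 'a \<Rightarrow> bool" where
  "near m x x' d \<longleftrightarrow> (\<forall>i<m. gabs (x ! i - x' ! i) < d)"

definition definable_family :: "(nat \<Rightarrow> ('a::linordered_ab_group_add) list set set) \<Rightarrow> nat \<Rightarrow> 'a list set \<Rightarrow> 'a \<Rightarrow> ('a list \<Rightarrow> 'a \<Rightarrow> 'a) \<Rightarrow> bool" where
  "definable_family S m C s F \<longleftrightarrow>
     {x @ [t, F x t] | x t. x \<in> C \<and> 0 < t \<and> t < s} \<in> S (m + 2)"

definition equi_continuous_family :: "nat \<Rightarrow> ('a::linordered_ab_group_add) list set \<Rightarrow> 'a \<Rightarrow> ('a list \<Rightarrow> 'a \<Rightarrow> 'a) \<Rightarrow> bool" where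
  "equi_continuous_family m C s F \<longleftrightarrow>
     (\<forall>e>0. \<forall>x\<in>C. \<exists>d>0. \<forall>t. 0 < t \<and> t < s \<longrightarrow>
        (\<forall>x'\<in>C. near m x x' d \<longrightarrow> gabs (F x t - F x' t) < e))"

definition pointwise_convergent_family :: "('a::linordered_ab_group_add) list set \<Rightarrow> 'a \<Rightarrow> ('a list \<Rightarrow> 'a \<Rightarrow> 'a) \<Rightarrow> bool" where
  "pointwise_convergent_family C s F \<longleftrightarrow>
     (\<forall>e>0. \<forall>x\<in>C. \<exists>s'>0. \<forall>t t'. 0 < t \<and> t < s' \<and> t < s \<and> 0 < t' \<and> t' < s' \<and> t' < s \<longrightarrow>
        gabs (F x t - F x t') < e)"

definition uniformly_convergent_family :: "('a::linordered_ab_group_add) list set \<Rightarrow> 'a \<Rightarrow> ('a list \<Rightarrow> 'a \<Rightarrow> 'a) \<Rightarrow> bool" where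
  "uniformly_convergent_family C s F \<longleftrightarrow>
     (\<forall>e>0. \<exists>s'>0. \<forall>x\<in>C. \<forall>t t'. 0 < t \<and> t < s' \<and> t < s \<and> 0 < t' \<and> t' < s' \<and> t' < s \<longrightarrow>
        gabs (F x t - F x t') < e)"

end

theory Submission
  imports Defs
begin


section \<open>Closure properties of structures\<close>

lemma ES_D: assumes "expansion_structure S"
  shows ES_sub0: "\<forall>n. S n \<subseteq> Pow (tuples n)"
    and ES_empty0: "\<forall>n. {} \<in> S n"
    and ES_compl0: "\<forall>n A. A \<in> S n \<longrightarrow> tuples n - A \<in> S n"
    and ES_Un0: "\<forall>n A B. A \<in> S n \<longrightarrow> B \<in> S n \<longrightarrow> A \<union> B \<in> S n"
    and ES_snoc0: "\<forall>n A. A \<in> S n \<longrightarrow> {xs @ [y] | xs y. xs \<in> A} \<in> S (Suc n)"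
    and ES_cons0: "\<forall>n A. A \<in> S n \<longrightarrow> {y # xs | xs y. xs \<in> A} \<in> S (Suc n)"
    and ES_diag00: "\<forall>n i j. i < j \<and> j < n \<longrightarrow> {xs \<in> tuples n. xs ! i = xs ! j} \<in> S n"
    and ES_butlast0: "\<forall>n A. A \<in> S (Suc n) \<longrightarrow> butlast ` A \<in> S n"
    and ES_single0: "\<forall>a. {[a]} \<in> S 1"
    and ES_lt0: "{[x, y] | x y. x < y} \<in> S 2"
    and ES_add0: "{[x, y, z] | x y z. z = x + y} \<in> S 3"
  apply (insert assms)
  apply (unfold expansion_structure_def)
  apply (elim conjE, assumption)+
  done

lemma ES_sub: "expansion_structure S \<Longrightarrow> A \<in> S n \<Longrightarrow> A \<subseteq> tuples n"
  using ES_sub0 by blast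

lemma ES_compl: "expansion_structure S \<Longrightarrow> A \<in> S n \<Longrightarrow> tuples n - A \<in> S n"
  using ES_compl0 by blast

lemma ES_Un: "expansion_structure S \<Longrightarrow> A \<in> S n \<Longrightarrow> B \<in> S n \<Longrightarrow> A \<union> B \<in> S n"
  using ES_Un0 by blast

lemma ES_empty: "expansion_structure S \<Longrightarrow> {} \<in> S n"
  using ES_empty0 by blast

lemma ES_T: "expansion_structure S \<Longrightarrow> tuples n \<in> S n"
  using ES_compl[of S "{}" n] ES_empty[of S n] by simp

lemma ES_Int: assumes "expansion_structure S" "A \<in> S n" "B \<in> S n" shows "A \<inter> B \<in> S n"
proof -
  have "A \<inter> B = tuples n - ((tuples n - A) \<union> (tuples n - B))"
    using ES_sub[OF assms(1,2)] ES_sub[OF assms(1,3)] by blast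
  thus ?thesis using assms by (simp add: ES_compl ES_Un)
qed

lemma ES_cons: "expansion_structure S \<Longrightarrow> A \<in> S n \<Longrightarrow> {y # xs | xs y. xs \<in> A} \<in> S (Suc n)"
  using ES_cons0 by blast

lemma ES_butlast: "expansion_structure S \<Longrightarrow> A \<in> S (Suc n) \<Longrightarrow> butlast ` A \<in> S n"
  using ES_butlast0 by blast

lemma ES_diag0: "expansion_structure S \<Longrightarrow> i < j \<Longrightarrow> j < n \<Longrightarrow> {xs \<in> tuples n. xs ! i = xs ! j} \<in> S n"
  using ES_diag00 by blast

lemma ES_diag: assumes "expansion_structure S" "i < n" "j < n"
  shows "{xs \<in> tuples n. xs ! i = xs ! j} \<in> S n"
proof -
  consider "i < j" | "i = j" | "j < i" by arith
  thus ?thesis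
  proof cases
    case 1 thus ?thesis using ES_diag0 assms by blast
  next
    case 2 thus ?thesis using ES_T[OF assms(1)] by simp
  next
    case 3
    have eq: "{xs \<in> tuples n. xs ! i = xs ! j} = {xs \<in> tuples n. xs ! j = xs ! i}" by auto
    show ?thesis unfolding eq by (rule ES_diag0[OF assms(1) 3 assms(2)])
  qed
qed

lemma ES_prefix: assumes "expansion_structure S" "A \<in> S k"
  shows "{ys @ zs | ys zs. length ys = n \<and> zs \<in> A} \<in> S (n + k)"
proof (induction n)
  case 0
  have "{ys @ zs | ys zs. length ys = 0 \<and> zs \<in> A} = A" by auto
  thus ?case using assms by simp
next
  case (Suc n)
  have "{ys @ zs | ys zs. length ys = Suc n \<and> zs \<in> A} =
        {y # xs | xs y. xs \<in> {ys @ zs | ys zs. length ys = n \<and> zs \<in> A}}"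
  proof (intro set_eqI iffI)
    fix w assume "w \<in> {ys @ zs | ys zs. length ys = Suc n \<and> zs \<in> A}"
    then obtain ys zs where "w = ys @ zs" "length ys = Suc n" "zs \<in> A" by blast
    then obtain y ys' where "ys = y # ys'" "length ys' = n" by (auto simp: length_Suc_conv)
    thus "w \<in> {y # xs | xs y. xs \<in> {ys @ zs | ys zs. length ys = n \<and> zs \<in> A}}"
      using \<open>w = ys @ zs\<close> \<open>zs \<in> A\<close> by auto
  next
    fix w assume "w \<in> {y # xs | xs y. xs \<in> {ys @ zs | ys zs. length ys = n \<and> zs \<in> A}}"
    then obtain y ys zs where "w = y # (ys @ zs)" "length ys = n" "zs \<in> A" by blast
    thus "w \<in> {ys @ zs | ys zs. length ys = Suc n \<and> zs \<in> A}"
      by (intro CollectI exI[of _ "y # ys"] exI[of _ zs]) auto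
  qed
  thus ?case using ES_cons[OF assms(1) Suc.IH] by simp
qed

lemma ES_proj: assumes "expansion_structure S"
  shows "A \<in> S (n + k) \<Longrightarrow> {xs. \<exists>zs. length zs = k \<and> xs @ zs \<in> A} \<in> S n"
proof (induction k arbitrary: A)
  case 0
  thus ?case by simp
next
  case (Suc k)
  have sub: "A \<subseteq> tuples (Suc (n + k))" using ES_sub[OF assms] Suc.prems by simp
  have bA: "butlast ` A \<in> S (n + k)" using ES_butlast[OF assms] Suc.prems by simp
  have "{xs. \<exists>zs. length zs = k \<and> xs @ zs \<in> butlast ` A} = {xs. \<exists>zs. length zs = Suc k \<and> xs @ zs \<in> A}"
  proof (intro set_eqI iffI)
    fix xs assume "xs \<in> {xs. \<exists>zs. length zs = k \<and> xs @ zs \<in> butlast ` A}"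
    then obtain zs w where zs: "length zs = k" "xs @ zs = butlast w" "w \<in> A" by blast
    have "w \<noteq> []" using sub zs(3) by (auto simp: tuples_def)
    hence "w = butlast w @ [last w]" by simp
    hence "xs @ (zs @ [last w]) \<in> A" using zs by (metis append_assoc)
    thus "xs \<in> {xs. \<exists>zs. length zs = Suc k \<and> xs @ zs \<in> A}" using zs(1)
      by (intro CollectI exI[of _ "zs @ [last w]"]) simp
  next
    fix xs assume "xs \<in> {xs. \<exists>zs. length zs = Suc k \<and> xs @ zs \<in> A}"
    then obtain zs where zs: "length zs = Suc k" "xs @ zs \<in> A" by blast
    hence "zs \<noteq> []" by auto
    hence "butlast (xs @ zs) = xs @ butlast zs" by (simp add: butlast_append)
    thus "xs \<in> {xs. \<exists>zs. length zs = k \<and> xs @ zs \<in> butlast ` A}" using zs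
      by (intro CollectI exI[of _ "butlast zs"]) (auto intro: image_eqI[of _ _ "xs @ zs"])
  qed
  thus ?case using Suc.IH[OF bA] by simp
qed

lemma ES_diags: assumes "expansion_structure S" "\<forall>i<k. f i < n" "j \<le> k"
  shows "{xs \<in> tuples (n + k). \<forall>i<j. xs ! (f i) = xs ! (n + i)} \<in> S (n + k)"
  using assms(3)
proof (induction j)
  case 0 thus ?case using ES_T[OF assms(1)] by simp
next
  case (Suc j)
  have eq: "{xs \<in> tuples (n + k). \<forall>i<Suc j. xs ! (f i) = xs ! (n + i)} =
    {xs \<in> tuples (n + k). \<forall>i<j. xs ! (f i) = xs ! (n + i)} \<inter> {xs \<in> tuples (n + k). xs ! (f j) = xs ! (n + j)}"
    by (auto simp: less_Suc_eq)
  have "f j < n" using Suc.prems assms(2) by simp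
  hence d1: "{xs \<in> tuples (n + k). xs ! (f j) = xs ! (n + j)} \<in> S (n + k)"
    using Suc.prems by (intro ES_diag[OF assms(1)]) auto
  have d0: "{xs \<in> tuples (n + k). \<forall>i<j. xs ! (f i) = xs ! (n + i)} \<in> S (n + k)"
    using Suc by simp
  show ?case unfolding eq by (rule ES_Int[OF assms(1) d0 d1])
qed

lemma ES_reindex: assumes ES: "expansion_structure S" and A: "A \<in> S k" and f: "\<forall>i<k. f i < n"
  shows "{xs \<in> tuples n. map (\<lambda>i. xs ! (f i)) [0..<k] \<in> A} \<in> S n"
proof -
  define P where "P = {ys @ zs | ys zs. length ys = n \<and> zs \<in> A} \<inter>
     {xs \<in> tuples (n + k). \<forall>i<k. xs ! (f i) = xs ! (n + i)}"
  have "P \<in> S (n + k)" unfolding P_def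
    using ES_Int[OF ES ES_prefix[OF ES A] ES_diags[OF ES f order_refl]] .
  note pr = ES_proj[OF ES this]
  have Ak: "A \<subseteq> tuples k" using ES_sub[OF ES A] .
  have "{xs. \<exists>zs. length zs = k \<and> xs @ zs \<in> P} = {xs \<in> tuples n. map (\<lambda>i. xs ! (f i)) [0..<k] \<in> A}"
  proof (intro set_eqI iffI)
    fix xs assume "xs \<in> {xs. \<exists>zs. length zs = k \<and> xs @ zs \<in> P}"
    then obtain zs ys zs' where h: "length zs = k" "xs @ zs = ys @ zs'" "length ys = n" "zs' \<in> A"
      "length (xs @ zs) = n + k" "\<forall>i<k. (xs @ zs) ! (f i) = (xs @ zs) ! (n + i)"
      unfolding P_def tuples_def by blast
    have lx: "length xs = n" using h by simp
    hence "xs = ys \<and> zs = zs'" using h(2,3) by (simp add: append_eq_append_conv)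
    moreover have "map (\<lambda>i. xs ! (f i)) [0..<k] = zs"
    proof (rule nth_equalityI)
      show "length (map (\<lambda>i. xs ! f i) [0..<k]) = length zs" using h by simp
      fix i assume "i < length (map (\<lambda>i. xs ! f i) [0..<k])"
      hence i: "i < k" by simp
      have "(xs @ zs) ! (f i) = xs ! f i" using f i lx by (simp add: nth_append)
      moreover have "(xs @ zs) ! (n + i) = zs ! i" using lx by (simp add: nth_append)
      ultimately show "map (\<lambda>i. xs ! f i) [0..<k] ! i = zs ! i" using h(6) i by simp
    qed
    ultimately show "xs \<in> {xs \<in> tuples n. map (\<lambda>i. xs ! (f i)) [0..<k] \<in> A}"
      using lx h(4) by (simp add: tuples_def)
  next
    fix xs assume "xs \<in> {xs \<in> tuples n. map (\<lambda>i. xs ! (f i)) [0..<k] \<in> A}"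
    hence lx: "length xs = n" and m: "map (\<lambda>i. xs ! (f i)) [0..<k] \<in> A" by (auto simp: tuples_def)
    let ?zs = "map (\<lambda>i. xs ! (f i)) [0..<k]"
    have "xs @ ?zs \<in> P" unfolding P_def tuples_def
      using lx m f by (auto simp: nth_append)
    thus "xs \<in> {xs. \<exists>zs. length zs = k \<and> xs @ zs \<in> P}" by (intro CollectI exI[of _ ?zs]) simp
  qed
  thus ?thesis using pr by simp
qed

section \<open>Formulas\<close>

datatype 'b fm = Rel "'b list set" "nat list" | Nt "'b fm" | Dis "'b fm" "'b fm" | Exi "'b fm"

fun sat :: "'b fm \<Rightarrow> 'b list \<Rightarrow> bool" where
  "sat (Rel A is) xs = (map (nth xs) is \<in> A)"
| "sat (Nt \<phi>) xs = (\<not> sat \<phi> xs)"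
| "sat (Dis \<phi> \<psi>) xs = (sat \<phi> xs \<or> sat \<psi> xs)"
| "sat (Exi \<phi>) xs = (\<exists>y. sat \<phi> (xs @ [y]))"

fun wff :: "(nat \<Rightarrow> 'b list set set) \<Rightarrow> nat \<Rightarrow> 'b fm \<Rightarrow> bool" where
  "wff S n (Rel A is) = (A \<in> S (length is) \<and> (\<forall>i\<in>set is. i < n))"
| "wff S n (Nt \<phi>) = wff S n \<phi>"
| "wff S n (Dis \<phi> \<psi>) = (wff S n \<phi> \<and> wff S n \<psi>)"
| "wff S n (Exi \<phi>) = wff S (Suc n) \<phi>"

definition setof :: "nat \<Rightarrow> 'b fm \<Rightarrow> 'b list set" where
  "setof n \<phi> = {xs \<in> tuples n. sat \<phi> xs}"

lemma mem_setof[simp]: "xs \<in> setof n \<phi> \<longleftrightarrow> length xs = n \<and> sat \<phi> xs"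
  by (simp add: setof_def tuples_def)

lemma setof_in: assumes ES: "expansion_structure S"
  shows "wff S n \<phi> \<Longrightarrow> setof n \<phi> \<in> S n"
proof (induction \<phi> arbitrary: n)
  case (Rel A "is")
  have "{xs \<in> tuples n. map (\<lambda>i. xs ! (is ! i)) [0..<length is] \<in> A} \<in> S n"
    using Rel by (intro ES_reindex[OF ES]) auto
  moreover have e: "\<And>xs. map (\<lambda>i. xs ! (is ! i)) [0..<length is] = map (nth xs) is"
    by (rule nth_equalityI) auto
  ultimately show ?case by (simp add: setof_def e)
next
  case (Nt \<phi>)
  have "setof n (Nt \<phi>) = tuples n - setof n \<phi>" by (auto simp: setof_def)
  thus ?case using Nt ES_compl[OF ES] by simp
next
  case (Dis \<phi> \<psi>)
  have "setof n (Dis \<phi> \<psi>) = setof n \<phi> \<union> setof n \<psi>" by (auto simp: setof_def)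
  thus ?case using Dis ES_Un[OF ES] by simp
next
  case (Exi \<phi>)
  have "setof n (Exi \<phi>) = butlast ` setof (Suc n) \<phi>"
  proof (intro set_eqI iffI)
    fix xs assume "xs \<in> setof n (Exi \<phi>)"
    then obtain y where "length xs = n" "sat \<phi> (xs @ [y])" by auto
    thus "xs \<in> butlast ` setof (Suc n) \<phi>" by (intro image_eqI[of _ _ "xs @ [y]"]) auto
  next
    fix xs assume "xs \<in> butlast ` setof (Suc n) \<phi>"
    then obtain w where w: "xs = butlast w" "length w = Suc n" "sat \<phi> w" by auto
    hence "w \<noteq> []" by auto
    hence "w = xs @ [last w]" using w by simp
    thus "xs \<in> setof n (Exi \<phi>)" using w by (auto intro!: exI[of _ "last w"])
  qed
  thus ?case using Exi ES_butlast[OF ES] by simp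
qed

definition "Cnj \<phi> \<psi> = Nt (Dis (Nt \<phi>) (Nt \<psi>))"
definition "Imp \<phi> \<psi> = Dis (Nt \<phi>) \<psi>"
definition "Fa \<phi> = Nt (Exi (Nt \<phi>))"

lemma sat_der[simp]: "sat (Cnj \<phi> \<psi>) xs = (sat \<phi> xs \<and> sat \<psi> xs)"
  "sat (Imp \<phi> \<psi>) xs = (sat \<phi> xs \<longrightarrow> sat \<psi> xs)"
  "sat (Fa \<phi>) xs = (\<forall>y. sat \<phi> (xs @ [y]))"
  by (auto simp: Cnj_def Imp_def Fa_def)

lemma wf_der[simp]: "wff S n (Cnj \<phi> \<psi>) = (wff S n \<phi> \<and> wff S n \<psi>)"
  "wff S n (Imp \<phi> \<psi>) = (wff S n \<phi> \<and> wff S n \<psi>)"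
  "wff S n (Fa \<phi>) = wff S (Suc n) \<phi>"
  by (auto simp: Cnj_def Imp_def Fa_def)

fun Ands where
  "Ands [] = Nt (Rel {} [])"
| "Ands (\<phi> # \<phi>s) = Cnj \<phi> (Ands \<phi>s)"

lemma sat_Ands[simp]: "sat (Ands fs) xs = (\<forall>\<phi>\<in>set fs. sat \<phi> xs)"
  by (induction fs) auto

lemma wf_Ands: "expansion_structure S \<Longrightarrow> \<forall>\<phi>\<in>set fs. wff S n \<phi> \<Longrightarrow> wff S n (Ands fs)"
  by (induction fs) (auto simp: ES_empty)

fun Alls where
  "Alls 0 \<phi> = \<phi>"
| "Alls (Suc k) \<phi> = Fa (Alls k \<phi>)"

lemma sat_Alls[simp]: "sat (Alls k \<phi>) xs = (\<forall>zs. length zs = k \<longrightarrow> sat \<phi> (xs @ zs))"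
proof (induction k arbitrary: xs)
  case 0 thus ?case by simp
next
  case (Suc k)
  show ?case
  proof
    assume "sat (Alls (Suc k) \<phi>) xs"
    thus "\<forall>zs. length zs = Suc k \<longrightarrow> sat \<phi> (xs @ zs)" using Suc
      by (auto simp: length_Suc_conv)
  next
    assume "\<forall>zs. length zs = Suc k \<longrightarrow> sat \<phi> (xs @ zs)"
    thus "sat (Alls (Suc k) \<phi>) xs" using Suc by simp
  qed
qed

lemma wf_Alls[simp]: "wff S n (Alls k \<phi>) = wff S (n + k) \<phi>"
  by (induction k arbitrary: n) auto



lemma gabs_less: "gabs x < d \<longleftrightarrow> x < d \<and> - x < d"
  unfolding gabs_def by simp

lemma gabs_le: "gabs x \<le> d \<longleftrightarrow> x \<le> d \<and> - x \<le> d"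
  unfolding gabs_def by simp

lemma gabs_nonneg: "0 \<le> gabs (x::'a::linordered_ab_group_add)"
  unfolding gabs_def by (metis le_max_iff_disj linorder_le_cases neg_0_le_iff_le)

lemma gabs_zero[simp]: "gabs (0::'a::linordered_ab_group_add) = 0"
  by (auto simp: gabs_def)

lemma gabs_commute: "gabs (a - b) = gabs (b - (a::'a::linordered_ab_group_add))"
  unfolding gabs_def by (metis minus_diff_eq max.commute)

lemma gabs_minus: "gabs (- a) = gabs (a::'a::linordered_ab_group_add)"
  unfolding gabs_def by (simp add: max.commute)

lemma gabs_triangle: "gabs (x + y) \<le> gabs x + gabs (y::'a::linordered_ab_group_add)"
proof -
  have "x + y \<le> max x (-x) + max y (-y)" by (intro add_mono) simp_all
  moreover have "-x + -y \<le> max x (-x) + max y (-y)" by (intro add_mono) simp_all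
  moreover have "-(x + y) = -x + -y" by simp
  ultimately show ?thesis unfolding gabs_def by simp
qed

lemma gabs_le0: "gabs x \<le> 0 \<Longrightarrow> x = (0::'a::linordered_ab_group_add)"
  unfolding gabs_def by auto

lemma gabs_diff_less: "gabs (x - y) < d \<longleftrightarrow> x < y + d \<and> y < x + (d::'a::linordered_ab_group_add)"
  by (simp add: gabs_less diff_less_eq add.commute)

lemma L1: "0 < (d::'a::linordered_ab_group_add) \<Longrightarrow> \<not> (c \<le> c - d)" by simp
lemma L2: "y \<le> c \<Longrightarrow> 0 < (d::'a::linordered_ab_group_add) \<Longrightarrow> y - c < d" by (meson le_iff_diff_le_0 order_le_less_trans)
lemma L3: "c - d < x \<Longrightarrow> x < (y::'a::linordered_ab_group_add) \<Longrightarrow> - (y - c) < d"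
proof -
  assume "c - d < x" "x < y"
  hence "c - d < y" by (rule less_trans)
  hence "c < y + d" by (simp add: diff_less_eq)
  hence "c - y < d" by (simp add: diff_less_eq add.commute)
  thus ?thesis by simp
qed
lemma L4: "0 < (d::'a::linordered_ab_group_add) \<Longrightarrow> \<not> (x + d \<le> x)" by simp
lemma L5: "y < x + d \<Longrightarrow> y - x < (d::'a::linordered_ab_group_add)" by (simp add: add.commute diff_less_eq)
lemma L6: "x \<le> y \<Longrightarrow> 0 < (d::'a::linordered_ab_group_add) \<Longrightarrow> - (y - x) < d" by (meson diff_ge_0_iff_ge neg_le_0_iff_le order_le_less_trans)

section \<open>Basic definable sets\<close>

definition "LTs = {[x, y] | x y. (x::'a::linordered_ab_group_add) < y}"
definition "ADDs = {[x, y, z] | x y z. z = x + (y::'a::linordered_ab_group_add)}"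
definition "EQs = {xs \<in> tuples 2. xs ! 0 = xs ! 1}"
definition "CST a = {[a]}"

lemma mem_base[simp]:
  "[p, q] \<in> LTs \<longleftrightarrow> p < q"
  "[p, q, r] \<in> ADDs \<longleftrightarrow> r = p + q"
  "[p, q] \<in> EQs \<longleftrightarrow> p = q"
  "[p] \<in> CST a \<longleftrightarrow> p = a"
  by (auto simp: LTs_def ADDs_def EQs_def CST_def tuples_def)

lemma base_in:
  assumes ES: "expansion_structure (S :: nat \<Rightarrow> ('a::linordered_ab_group_add) list set set)"
  shows "LTs \<in> S 2" "ADDs \<in> S 3" "EQs \<in> S 2" "CST (a::'a) \<in> S 1"
  using ES_lt0[OF ES] ES_add0[OF ES] ES_diag[OF ES, of 0 2 1] ES_single0[OF ES]
  by (auto simp: LTs_def ADDs_def EQs_def CST_def)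

definition "LE2 = setof 2 (Dis (Rel LTs [0, 1]) (Rel EQs [0, 1]))"
definition "GEC a = setof 1 (Exi (Cnj (Rel (CST a) [1]) (Rel LE2 [1, 0])))"
definition "LEC b = setof 1 (Exi (Cnj (Rel (CST b) [1]) (Rel LE2 [0, 1])))"
definition "GTC a = setof 1 (Exi (Cnj (Rel (CST a) [1]) (Rel LTs [1, 0])))"
definition "LTC b = setof 1 (Exi (Cnj (Rel (CST b) [1]) (Rel LTs [0, 1])))"
definition "DIST3 = setof 3 (Cnj (Exi (Cnj (Rel ADDs [1, 2, 3]) (Rel LTs [0, 3])))
                                (Exi (Cnj (Rel ADDs [0, 2, 3]) (Rel LTs [1, 3]))))"
definition "DISTC e = setof 2 (Exi (Cnj (Rel (CST e) [2]) (Rel DIST3 [0, 1, 2])))"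
definition "GC c = setof 2 (Exi (Cnj (Rel (CST c) [2]) (Rel DIST3 [2, 0, 1])))"

lemma mem_LE2[simp]: "[x, y] \<in> LE2 \<longleftrightarrow> x \<le> (y::'a::linordered_ab_group_add)"
  by (auto simp: LE2_def)
lemma mem_GEC[simp]: "[x] \<in> GEC a \<longleftrightarrow> a \<le> (x::'a::linordered_ab_group_add)"
  by (auto simp: GEC_def)
lemma mem_LEC[simp]: "[x] \<in> LEC b \<longleftrightarrow> x \<le> (b::'a::linordered_ab_group_add)"
  by (auto simp: LEC_def)
lemma mem_GTC[simp]: "[x] \<in> GTC a \<longleftrightarrow> a < (x::'a::linordered_ab_group_add)"
  by (auto simp: GTC_def)
lemma mem_LTC[simp]: "[x] \<in> LTC b \<longleftrightarrow> x < (b::'a::linordered_ab_group_add)"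
  by (auto simp: LTC_def)
lemma mem_DIST3[simp]: "[x, y, d] \<in> DIST3 \<longleftrightarrow> gabs (x - y) < (d::'a::linordered_ab_group_add)"
  by (auto simp: DIST3_def gabs_diff_less)
lemma mem_DISTC[simp]: "[x, y] \<in> DISTC e \<longleftrightarrow> gabs (x - y) < (e::'a::linordered_ab_group_add)"
  by (auto simp: DISTC_def)
lemma mem_GC[simp]: "[x, w] \<in> GC c \<longleftrightarrow> gabs (c - x) < (w::'a::linordered_ab_group_add)"
  by (auto simp: GC_def)

lemma der_in:
  assumes ES: "expansion_structure (S :: nat \<Rightarrow> ('a::linordered_ab_group_add) list set set)"
  shows "LE2 \<in> S 2" "GEC (a::'a) \<in> S 1" "LEC (a::'a) \<in> S 1" "GTC (a::'a) \<in> S 1" "LTC (a::'a) \<in> S 1"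
    "DIST3 \<in> S 3" "DISTC (a::'a) \<in> S 2" "GC (a::'a) \<in> S 2"
proof -
  note b = base_in[OF ES, unfolded numeral_2_eq_2 numeral_3_eq_3 One_nat_def]
  show l: "LE2 \<in> S 2" unfolding LE2_def by (rule setof_in[OF ES]) (simp add: b)
  show "GEC a \<in> S 1" unfolding GEC_def by (rule setof_in[OF ES]) (simp add: b l[unfolded numeral_2_eq_2])
  show "LEC a \<in> S 1" unfolding LEC_def by (rule setof_in[OF ES]) (simp add: b l[unfolded numeral_2_eq_2])
  show "GTC a \<in> S 1" unfolding GTC_def by (rule setof_in[OF ES]) (simp add: b l[unfolded numeral_2_eq_2])
  show "LTC a \<in> S 1" unfolding LTC_def by (rule setof_in[OF ES]) (simp add: b l[unfolded numeral_2_eq_2])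
  show d: "DIST3 \<in> S 3" unfolding DIST3_def by (rule setof_in[OF ES]) (simp add: b l[unfolded numeral_2_eq_2])
  show "DISTC a \<in> S 2" unfolding DISTC_def by (rule setof_in[OF ES]) (simp add: b d[unfolded numeral_3_eq_3])
  show "GC a \<in> S 2" unfolding GC_def by (rule setof_in[OF ES]) (simp add: b d[unfolded numeral_3_eq_3])
qed

lemmas der_in' = der_in[unfolded numeral_2_eq_2 numeral_3_eq_3 One_nat_def]
lemmas base_in' = base_in[unfolded numeral_2_eq_2 numeral_3_eq_3 One_nat_def]

lemma definable1_setof:
  assumes "setof 1 \<phi> \<in> S 1" shows "definable1 S {c. sat \<phi> [c]}"
proof -
  have "(\<lambda>x. [x]) ` {c. sat \<phi> [c]} = setof 1 \<phi>"
  proof (intro set_eqI iffI)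
    fix xs assume "xs \<in> setof 1 \<phi>"
    then obtain c where "xs = [c]" "sat \<phi> [c]" by (auto simp: length_Suc_conv)
    thus "xs \<in> (\<lambda>x. [x]) ` {c. sat \<phi> [c]}" by auto
  qed auto
  thus ?thesis using assms by (simp add: definable1_def)
qed



lemma one_dim:
  fixes S :: "nat \<Rightarrow> ('a::linordered_ab_group_add) list set set"
  assumes ES: "expansion_structure S" and DC: "definably_complete S"
    and ab: "a \<le> b" and PS: "P \<in> S (Suc (Suc 0))"
    and mono: "\<And>y w w'. [y, w] \<in> P \<Longrightarrow> 0 < w' \<Longrightarrow> w' \<le> w \<Longrightarrow> [y, w'] \<in> P"
    and loc: "\<And>y. a \<le> y \<Longrightarrow> y \<le> b \<Longrightarrow>
       \<exists>w>0. \<exists>d>0. \<forall>y'. a \<le> y' \<longrightarrow> y' \<le> b \<longrightarrow> gabs (y' - y) < d \<longrightarrow> [y', w] \<in> P"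
  shows "\<exists>w>0. \<forall>y. a \<le> y \<longrightarrow> y \<le> b \<longrightarrow> [y, w] \<in> P"
proof -
  note di = der_in'[OF ES]
  define \<phi>X where "\<phi>X = Cnj (Rel (GEC a) [0]) (Cnj (Rel (LEC b) [0]) (Exi (Cnj (Rel (GTC 0) [1])
     (Fa (Imp (Cnj (Rel (GEC a) [2]) (Rel LE2 [2, 0])) (Rel P [2, 1]))))))"
  have satX: "\<And>c. sat \<phi>X [c] \<longleftrightarrow> a \<le> c \<and> c \<le> b \<and> (\<exists>w>0. \<forall>y. a \<le> y \<and> y \<le> c \<longrightarrow> [y, w] \<in> P)"
    by (simp add: \<phi>X_def)
  define X where "X = {c. sat \<phi>X [c]}"
  have defX: "definable1 S X" unfolding X_def
    by (rule definable1_setof, rule setof_in[OF ES]) (simp add: \<phi>X_def di PS)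
  have aX: "a \<in> X"
  proof -
    obtain w d where wd: "w > 0" "d > 0" "\<forall>y'. a \<le> y' \<longrightarrow> y' \<le> b \<longrightarrow> gabs (y' - a) < d \<longrightarrow> [y', w] \<in> P"
      using loc[OF order_refl ab] by blast
    have "\<forall>y. a \<le> y \<and> y \<le> a \<longrightarrow> [y, w] \<in> P" using wd ab by (auto dest: order_antisym)
    thus ?thesis using wd(1) ab by (auto simp: X_def satX)
  qed
  have Xb: "\<forall>x\<in>X. x \<le> b" by (auto simp: X_def satX)
  obtain cs where ub: "\<forall>x\<in>X. x \<le> cs" and least: "\<And>b'. (\<forall>x\<in>X. x \<le> b') \<Longrightarrow> cs \<le> b'"
    using DC[unfolded definably_complete_def, rule_format, OF defX] aX Xb by blast
  have acs: "a \<le> cs" using ub aX by blast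
  have csb: "cs \<le> b" using least Xb by blast
  have csX: "cs \<in> X"
  proof -
    obtain w0 d0 where w0: "w0 > 0" "d0 > 0"
      "\<forall>y'. a \<le> y' \<longrightarrow> y' \<le> b \<longrightarrow> gabs (y' - cs) < d0 \<longrightarrow> [y', w0] \<in> P"
      using loc[OF acs csb] by blast
    have "\<not> (\<forall>x\<in>X. x \<le> cs - d0)"
    proof
      assume "\<forall>x\<in>X. x \<le> cs - d0"
      hence "cs \<le> cs - d0" by (rule least)
      thus False using w0(2) L1 by blast
    qed
    then obtain c where c: "c \<in> X" "cs - d0 < c" by (auto simp: not_le)
    then obtain w1 where w1: "w1 > 0" "\<forall>y. a \<le> y \<and> y \<le> c \<longrightarrow> [y, w1] \<in> P"
      by (auto simp: X_def satX)
    have "\<forall>y. a \<le> y \<and> y \<le> cs \<longrightarrow> [y, min w0 w1] \<in> P"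
    proof (intro allI impI)
      fix y assume y: "a \<le> y \<and> y \<le> cs"
      show "[y, min w0 w1] \<in> P"
      proof (cases "y \<le> c")
        case True
        thus ?thesis using w1 y w0(1) mono[of y w1 "min w0 w1"] by auto
      next
        case False
        have "y - cs < d0" using y w0(2) L2 by blast
        moreover have "- (y - cs) < d0" using False c(2) L3[of cs d0 c y] by simp
        ultimately have "gabs (y - cs) < d0" by (simp add: gabs_less)
        hence "[y, w0] \<in> P" using w0(3) y csb by auto
        thus ?thesis using w0(1) w1(1) mono[of y w0 "min w0 w1"] by auto
      qed
    qed
    thus ?thesis using acs csb w0(1) w1(1) by (auto simp: X_def satX intro!: exI[of _ "min w0 w1"])
  qed
  then obtain wc where wc: "wc > 0" "\<forall>y. a \<le> y \<and> y \<le> cs \<longrightarrow> [y, wc] \<in> P"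
    by (auto simp: X_def satX)
  show ?thesis
  proof (cases "cs = b")
    case True thus ?thesis using wc by auto
  next
    case False
    hence csb': "cs < b" using csb by simp
    define \<phi>Y where "\<phi>Y = Cnj (Rel (GTC cs) [0]) (Rel (LEC b) [0])"
    define Y where "Y = {c. sat \<phi>Y [c]}"
    have memY: "\<And>y. y \<in> Y \<longleftrightarrow> cs < y \<and> y \<le> b" by (simp add: Y_def \<phi>Y_def)
    have defY: "definable1 S Y" unfolding Y_def
      by (rule definable1_setof, rule setof_in[OF ES]) (simp add: \<phi>Y_def di)
    have bY: "b \<in> Y" using csb' memY by simp
    have Ylb: "\<forall>y\<in>Y. cs \<le> y"
    proof
      fix y assume "y \<in> Y"
      hence "cs < y" by (simp add: memY)
      thus "cs \<le> y" by simp
    qed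
    obtain dd where lb: "\<forall>y\<in>Y. dd \<le> y" and great: "\<And>b'. (\<forall>y\<in>Y. b' \<le> y) \<Longrightarrow> b' \<le> dd"
      using DC[unfolded definably_complete_def, rule_format, OF defY] bY Ylb by blast
    have csdd: "cs \<le> dd" using great Ylb by blast
    have ddb: "dd \<le> b" using lb bY by blast
    have add: "a \<le> dd" using acs csdd by simp
    obtain w2 d2 where w2: "w2 > 0" "d2 > 0"
      "\<forall>y'. a \<le> y' \<longrightarrow> y' \<le> b \<longrightarrow> gabs (y' - dd) < d2 \<longrightarrow> [y', w2] \<in> P"
      using loc[OF add ddb] by blast
    have "\<not> (\<forall>y\<in>Y. dd + d2 \<le> y)"
    proof
      assume "\<forall>y\<in>Y. dd + d2 \<le> y"
      hence "dd + d2 \<le> dd" by (rule great)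
      thus False using w2(2) L4 by blast
    qed
    then obtain y1 where y1: "y1 \<in> Y" "y1 < dd + d2" by (auto simp: not_le)
    have "\<forall>y. a \<le> y \<and> y \<le> y1 \<longrightarrow> [y, min wc w2] \<in> P"
    proof (intro allI impI)
      fix y assume y: "a \<le> y \<and> y \<le> y1"
      show "[y, min wc w2] \<in> P"
      proof (cases "y \<le> cs")
        case True
        thus ?thesis using wc y w2(1) mono[of y wc "min wc w2"] by auto
      next
        case False
        hence "cs < y" by simp
        moreover have "y1 \<le> b" using y1(1) unfolding memY by simp
        ultimately have yY: "y \<in> Y" using y unfolding memY by (meson order_trans)
        hence ddy: "dd \<le> y" using lb by blast
        have "y - dd < d2" using y y1(2) L5[of y dd d2] by (meson le_less_trans)
        moreover have "- (y - dd) < d2" using ddy w2(2) L6 by blast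
        ultimately have "gabs (y - dd) < d2" by (simp add: gabs_less)
        hence "[y, w2] \<in> P" using w2(3) y yY memY by auto
        thus ?thesis using wc(1) w2(1) mono[of y w2 "min wc w2"] by auto
      qed
    qed
    hence "y1 \<in> X" using y1(1) memY acs wc(1) w2(1)
      by (auto simp: X_def satX intro!: exI[of _ "min wc w2"])
    hence "y1 \<le> cs" using ub by blast
    thus ?thesis using y1(1) memY by auto
  qed
qed



definition BOX :: "nat \<Rightarrow> 'a::linordered_ab_group_add \<Rightarrow> 'a \<Rightarrow> 'a list set" where
  "BOX m a b = {xs \<in> tuples m. \<forall>i<m. a \<le> xs ! i \<and> xs ! i \<le> b}"

lemma BOX_in: assumes ES: "expansion_structure (S :: nat \<Rightarrow> ('a::linordered_ab_group_add) list set set)"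
  shows "BOX m (a::'a) b \<in> S m"
proof -
  have "setof m (Ands (map (\<lambda>i. Cnj (Rel (GEC a) [i]) (Rel (LEC b) [i])) [0..<m])) = BOX m a b"
    by (auto simp: BOX_def tuples_def)
  moreover have "setof m (Ands (map (\<lambda>i. Cnj (Rel (GEC a) [i]) (Rel (LEC b) [i])) [0..<m])) \<in> S m"
    by (rule setof_in[OF ES], rule wf_Ands[OF ES]) (auto simp: der_in'[OF ES])
  ultimately show ?thesis by simp
qed

lemma BOX_snoc: "xs @ [y] \<in> BOX (Suc m) a b \<longleftrightarrow> xs \<in> BOX m a b \<and> a \<le> y \<and> y \<le> b"
proof
  assume h: "xs @ [y] \<in> BOX (Suc m) a b"
  hence l: "length xs = m" by (simp add: BOX_def tuples_def)
  have "\<forall>i<Suc m. a \<le> (xs @ [y]) ! i \<and> (xs @ [y]) ! i \<le> b" using h by (simp add: BOX_def)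
  thus "xs \<in> BOX m a b \<and> a \<le> y \<and> y \<le> b" using l
    by (auto simp: BOX_def tuples_def nth_append less_Suc_eq all_conj_distrib)
next
  assume "xs \<in> BOX m a b \<and> a \<le> y \<and> y \<le> b"
  thus "xs @ [y] \<in> BOX (Suc m) a b"
    by (auto simp: BOX_def tuples_def nth_append less_Suc_eq)
qed

lemma map_nth_prefix: "length xs = m \<Longrightarrow> map (nth (xs @ ys)) [0..<m] = xs"
  by (rule nth_equalityI) (auto simp: nth_append)

lemma map_nth_all: "length xs = m \<Longrightarrow> map (nth xs) [0..<m] = xs"
  by (rule nth_equalityI) auto

lemma snoc_split: "length zs = Suc m \<Longrightarrow> \<exists>xs y. zs = xs @ [y] \<and> length xs = m"
  by (metis length_Suc_conv_rev)

lemma compact_box: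
  fixes S :: "nat \<Rightarrow> ('a::linordered_ab_group_add) list set set"
  assumes ES: "expansion_structure S" and DC: "definably_complete S" and ab: "a \<le> b"
  shows "Z \<in> S (Suc m) \<Longrightarrow> (\<forall>zs u u'. zs @ [u] \<in> Z \<longrightarrow> 0 < u' \<longrightarrow> u' \<le> u \<longrightarrow> zs @ [u'] \<in> Z) \<Longrightarrow>
    (\<forall>xs\<in>BOX m a b. \<exists>u>0. \<exists>d>0. \<forall>xs'\<in>BOX m a b. near m xs xs' d \<longrightarrow> xs' @ [u] \<in> Z) \<Longrightarrow>
    \<exists>u>0. \<forall>xs\<in>BOX m a b. xs @ [u] \<in> Z"
proof (induction m arbitrary: Z)
  case 0
  have B0: "BOX 0 a b = {[]}" by (auto simp: BOX_def tuples_def)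
  obtain u d where "u > 0" "d > 0" "\<forall>xs'\<in>BOX 0 a b. near 0 [] xs' d \<longrightarrow> xs' @ [u] \<in> Z"
    using "0.prems"(3) B0 by auto
  thus ?case using B0 by (auto simp: near_def)
next
  case (Suc m)
  note ZS = Suc.prems(1) and Zmono = Suc.prems(2) and Zloc = Suc.prems(3)
  define Z1 where "Z1 = setof (Suc m) (Fa (Imp (Cnj (Rel (GEC a) [Suc m]) (Rel (LEC b) [Suc m]))
      (Rel Z ([0..<m] @ [Suc m, m]))))"
  have Z1mem: "\<And>xs u. length xs = m \<Longrightarrow> xs @ [u] \<in> Z1 \<longleftrightarrow> (\<forall>y. a \<le> y \<and> y \<le> b \<longrightarrow> xs @ [y, u] \<in> Z)"
    by (simp add: Z1_def map_nth_prefix nth_append)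
  have Z1len: "\<And>zs. zs \<in> Z1 \<Longrightarrow> length zs = Suc m" by (simp add: Z1_def)
  have Z1S: "Z1 \<in> S (Suc m)" unfolding Z1_def
    by (rule setof_in[OF ES]) (auto simp: der_in'[OF ES] ZS)
  have Z1mono: "\<forall>zs u u'. zs @ [u] \<in> Z1 \<longrightarrow> 0 < u' \<longrightarrow> u' \<le> u \<longrightarrow> zs @ [u'] \<in> Z1"
  proof (intro allI impI)
    fix zs u u' assume h: "zs @ [u] \<in> Z1" "0 < u'" "u' \<le> u"
    have l: "length zs = m" using Z1len[OF h(1)] by simp
    have "\<forall>y. a \<le> y \<and> y \<le> b \<longrightarrow> (zs @ [y]) @ [u'] \<in> Z"
    proof (intro allI impI)
      fix y assume "a \<le> y \<and> y \<le> b"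
      hence "(zs @ [y]) @ [u] \<in> Z" using h(1) Z1mem[OF l] by simp
      thus "(zs @ [y]) @ [u'] \<in> Z" using Zmono h by blast
    qed
    thus "zs @ [u'] \<in> Z1" using Z1mem[OF l] by simp
  qed
  have Z1loc: "\<forall>xs\<in>BOX m a b. \<exists>u>0. \<exists>d>0. \<forall>xs'\<in>BOX m a b. near m xs xs' d \<longrightarrow> xs' @ [u] \<in> Z1"
  proof
    fix xs assume xsB: "xs \<in> BOX m a b"
    define P where "P = setof (Suc (Suc 0)) (Alls m (Imp (Cnj (Rel (BOX m a b) (map (\<lambda>i. Suc (Suc i)) [0..<m]))
        (Ands (map (\<lambda>i. Rel (GC (xs ! i)) [Suc (Suc i), 1]) [0..<m])))
        (Rel Z (map (\<lambda>i. Suc (Suc i)) [0..<m] @ [0, 1]))))"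
    have Pmem: "\<And>y w. [y, w] \<in> P \<longleftrightarrow>
        (\<forall>xs'. length xs' = m \<longrightarrow> xs' \<in> BOX m a b \<longrightarrow> near m xs xs' w \<longrightarrow> xs' @ [y, w] \<in> Z)"
      by (simp add: P_def map_nth_all near_def o_def) auto
    have PS: "P \<in> S (Suc (Suc 0))" unfolding P_def
      by (rule setof_in[OF ES]) (simp add: ZS BOX_in[OF ES] der_in'[OF ES] wf_Ands[OF ES])
    have Pmono: "\<And>y w w'. [y, w] \<in> P \<Longrightarrow> 0 < w' \<Longrightarrow> w' \<le> w \<Longrightarrow> [y, w'] \<in> P"
    proof -
      fix y w w' assume h: "[y, w] \<in> P" "0 < w'" "w' \<le> w"
      show "[y, w'] \<in> P" unfolding Pmem
      proof (intro allI impI)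
        fix xs' assume "length xs' = m" "xs' \<in> BOX m a b" "near m xs xs' w'"
        moreover hence "near m xs xs' w" using h(3) by (auto simp: near_def intro: less_le_trans)
        ultimately have "(xs' @ [y]) @ [w] \<in> Z" using h(1) Pmem by simp
        thus "xs' @ [y, w'] \<in> Z" using Zmono h by (metis append_Cons append_Nil append_assoc)
      qed
    qed
    have Ploc: "\<And>y. a \<le> y \<Longrightarrow> y \<le> b \<Longrightarrow>
       \<exists>w>0. \<exists>d>0. \<forall>y'. a \<le> y' \<longrightarrow> y' \<le> b \<longrightarrow> gabs (y' - y) < d \<longrightarrow> [y', w] \<in> P"
    proof -
      fix y0 assume y0: "a \<le> y0" "y0 \<le> b"
      have "xs @ [y0] \<in> BOX (Suc m) a b" using xsB y0 BOX_snoc by blast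
      then obtain u \<delta> where u: "u > 0" "\<delta> > 0"
        "\<forall>zs\<in>BOX (Suc m) a b. near (Suc m) (xs @ [y0]) zs \<delta> \<longrightarrow> zs @ [u] \<in> Z"
        using Zloc by blast
      have lx: "length xs = m" using xsB by (simp add: BOX_def tuples_def)
      have "\<forall>y'. a \<le> y' \<longrightarrow> y' \<le> b \<longrightarrow> gabs (y' - y0) < \<delta> \<longrightarrow> [y', min u \<delta>] \<in> P"
      proof (intro allI impI)
        fix y' assume y': "a \<le> y'" "y' \<le> b" "gabs (y' - y0) < \<delta>"
        show "[y', min u \<delta>] \<in> P" unfolding Pmem
        proof (intro allI impI)
          fix xs' assume xs': "length xs' = m" "xs' \<in> BOX m a b" "near m xs xs' (min u \<delta>)"
          have zB: "xs' @ [y'] \<in> BOX (Suc m) a b" using xs' y' BOX_snoc by blast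
          have "near (Suc m) (xs @ [y0]) (xs' @ [y']) \<delta>" unfolding near_def
          proof (intro allI impI)
            fix i assume "i < Suc m"
            hence "i < m \<or> i = m" by auto
            thus "gabs ((xs @ [y0]) ! i - (xs' @ [y']) ! i) < \<delta>"
            proof
              assume i: "i < m"
              hence "gabs (xs ! i - xs' ! i) < min u \<delta>" using xs'(3) by (simp add: near_def)
              thus ?thesis using i lx xs'(1) by (simp add: nth_append)
            next
              assume i: "i = m"
              thus ?thesis using lx xs'(1) y'(3) gabs_commute[of y' y0] by (simp add: nth_append)
            qed
          qed
          hence "(xs' @ [y']) @ [u] \<in> Z" using u(3) zB by blast
          hence "(xs' @ [y']) @ [min u \<delta>] \<in> Z" using Zmono u(1,2) by (meson min.cobounded1 min_less_iff_conj)
          thus "xs' @ [y', min u \<delta>] \<in> Z" by simp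
        qed
      qed
      thus "\<exists>w>0. \<exists>d>0. \<forall>y'. a \<le> y' \<longrightarrow> y' \<le> b \<longrightarrow> gabs (y' - y0) < d \<longrightarrow> [y', w] \<in> P"
        using u(1,2) by (intro exI[of _ "min u \<delta>"] exI[of _ \<delta>]) auto
    qed
    have "\<exists>w>0. \<forall>y. a \<le> y \<longrightarrow> y \<le> b \<longrightarrow> [y, w] \<in> P"
      by (rule one_dim[OF ES DC ab PS Pmono Ploc])
    then obtain w where w: "w > 0" "\<forall>y. a \<le> y \<longrightarrow> y \<le> b \<longrightarrow> [y, w] \<in> P"
      by blast
    have "\<forall>xs'\<in>BOX m a b. near m xs xs' w \<longrightarrow> xs' @ [w] \<in> Z1"
    proof (intro ballI impI)
      fix xs' assume h: "xs' \<in> BOX m a b" "near m xs xs' w"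
      have l: "length xs' = m" using h(1) by (simp add: BOX_def tuples_def)
      show "xs' @ [w] \<in> Z1" unfolding Z1mem[OF l] using w h l Pmem by blast
    qed
    thus "\<exists>u>0. \<exists>d>0. \<forall>xs'\<in>BOX m a b. near m xs xs' d \<longrightarrow> xs' @ [u] \<in> Z1"
      using w(1) by blast
  qed
  obtain u where u: "u > 0" "\<forall>xs\<in>BOX m a b. xs @ [u] \<in> Z1"
    using Suc.IH[OF Z1S Z1mono Z1loc] by blast
  have "\<forall>zs\<in>BOX (Suc m) a b. zs @ [u] \<in> Z"
  proof
    fix zs assume zs: "zs \<in> BOX (Suc m) a b"
    hence "length zs = Suc m" by (simp add: BOX_def tuples_def)
    then obtain xs y where xy: "zs = xs @ [y]" "length xs = m"
      using snoc_split by blast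
    hence "xs @ [y] \<in> BOX (Suc m) a b" using zs by simp
    hence "xs \<in> BOX m a b" "a \<le> y" "y \<le> b" unfolding BOX_snoc by simp_all
    hence "xs @ [y, u] \<in> Z" using u Z1mem[OF xy(2)] by blast
    thus "zs @ [u] \<in> Z" using xy by simp
  qed
  thus ?case using u(1) by blast
qed



lemma half:
  assumes "0 < (e::'a::linordered_ab_group_add)"
  shows "\<exists>d>0. \<forall>x y. gabs x < d \<longrightarrow> gabs y < d \<longrightarrow> gabs (x + y) < e"
proof (cases "\<exists>c. 0 < c \<and> c < e")
  case True
  then obtain c where c: "0 < c" "c < e" by blast
  have ec: "0 < e - c" using c by simp
  have "\<forall>x y. gabs x < min c (e - c) \<longrightarrow> gabs y < min c (e - c) \<longrightarrow> gabs (x + y) < e"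
  proof (intro allI impI)
    fix x y assume "gabs x < min c (e - c)" "gabs y < min c (e - c)"
    hence "gabs x < c" "gabs y < e - c" by simp_all
    hence "gabs x + gabs y < c + (e - c)" by (rule add_strict_mono)
    thus "gabs (x + y) < e" using gabs_triangle[of x y] by simp
  qed
  thus ?thesis using c ec by (intro exI[of _ "min c (e - c)"]) simp
next
  case False
  have z: "\<And>x. gabs x < e \<Longrightarrow> x = 0"
  proof -
    fix x assume "gabs x < e"
    hence "\<not> 0 < gabs x" using False by blast
    hence "gabs x \<le> 0" by simp
    thus "x = 0" by (rule gabs_le0)
  qed
  have "\<forall>x y. gabs x < e \<longrightarrow> gabs y < e \<longrightarrow> gabs (x + y) < e"
  proof (intro allI impI)
    fix x y assume "gabs x < e" "gabs y < e"
    hence "x = 0" "y = 0" using z by auto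
    thus "gabs (x + y) < e" using assms by simp
  qed
  thus ?thesis using assms by blast
qed

lemma split3:
  assumes "0 < (e::'a::linordered_ab_group_add)"
  shows "\<exists>e'>0. \<forall>x y z. gabs x < e' \<longrightarrow> gabs y < e' \<longrightarrow> gabs z < e' \<longrightarrow> gabs (x + y + z) < e"
proof -
  obtain d1 where d1: "d1 > 0" "\<forall>x y. gabs x < d1 \<longrightarrow> gabs y < d1 \<longrightarrow> gabs (x + y) < e"
    using half[OF assms] by blast
  obtain d2 where d2: "d2 > 0" "\<forall>x y. gabs x < d2 \<longrightarrow> gabs y < d2 \<longrightarrow> gabs (x + y) < d1"
    using half[OF d1(1)] by blast
  have "\<forall>x y z. gabs x < min d1 d2 \<longrightarrow> gabs y < min d1 d2 \<longrightarrow> gabs z < min d1 d2 \<longrightarrow> gabs (x + y + z) < e"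
    using d1(2) d2(2) by simp
  thus ?thesis using d1(1) d2(1) by (intro exI[of _ "min d1 d2"]) simp
qed

lemma oint_radius:
  fixes c p :: "'a::linordered_ab_group_add"
  assumes c: "c \<in> oint lo hi" and p: "0 < (p::'a::linordered_ab_group_add)"
  shows "\<exists>d>0. \<forall>y. gabs (c - y) < d \<longrightarrow> y \<in> oint lo hi"
proof -
  have lo: "\<And>l y d. lo = Some l \<Longrightarrow> d \<le> c - l \<Longrightarrow> gabs (c - y) < d \<Longrightarrow> l < y"
  proof -
    fix l y d assume "lo = Some l" "d \<le> c - l" "gabs (c - y) < d"
    hence "c - y < d" "d \<le> c - l" by (simp_all add: gabs_less)
    hence "c - y < c - l" by (rule less_le_trans)
    thus "l < y" by simp
  qed
  have hi: "\<And>h y d. hi = Some h \<Longrightarrow> d \<le> h - c \<Longrightarrow> gabs (c - y) < d \<Longrightarrow> y < h"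
  proof -
    fix h y d assume "hi = Some h" "d \<le> h - c" "gabs (c - y) < d"
    hence "y - c < d" "d \<le> h - c" by (simp_all add: gabs_less)
    hence "y - c < h - c" by (rule less_le_trans)
    thus "y < h" by simp
  qed
  define dl where "dl = (case lo of None \<Rightarrow> p | Some l \<Rightarrow> c - l)"
  define dh where "dh = (case hi of None \<Rightarrow> p | Some h \<Rightarrow> h - c)"
  have "0 < dl" using c p by (cases lo) (auto simp: dl_def oint_def)
  moreover have "0 < dh" using c p by (cases hi) (auto simp: dh_def oint_def)
  moreover have "\<forall>y. gabs (c - y) < min dl dh \<longrightarrow> y \<in> oint lo hi"
  proof (intro allI impI)
    fix y assume y: "gabs (c - y) < min dl dh"
    have "case lo of None \<Rightarrow> True | Some b \<Rightarrow> b < y"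
    proof (cases lo)
      case (Some l) thus ?thesis using lo[OF Some, of "min dl dh" y] y by (simp add: dl_def)
    qed simp
    moreover have "case hi of None \<Rightarrow> True | Some b \<Rightarrow> y < b"
    proof (cases hi)
      case (Some h) thus ?thesis using hi[OF Some, of "min dl dh" y] y by (simp add: dh_def)
    qed simp
    ultimately show "y \<in> oint lo hi" by (simp add: oint_def)
  qed
  ultimately show ?thesis by (intro exI[of _ "min dl dh"]) simp
qed

lemma finite_min:
  fixes m :: nat and Q :: "nat \<Rightarrow> 'a::linordered_ab_group_add \<Rightarrow> bool"
  assumes "\<forall>i<m. \<exists>d>0. Q i d" and "\<forall>i d d'. Q i d \<longrightarrow> 0 < d' \<longrightarrow> d' \<le> d \<longrightarrow> Q i d'"
    and "0 < (p::'a)"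
  shows "\<exists>d>0. \<forall>i<m. Q i d"
  using assms(1)
proof (induction m)
  case 0 thus ?case using assms(3) by blast
next
  case (Suc m)
  then obtain d1 where d1: "d1 > 0" "\<forall>i<m. Q i d1" by auto
  obtain d2 where d2: "d2 > 0" "Q m d2" using Suc.prems by blast
  have "\<forall>i<Suc m. Q i (min d1 d2)"
    using d1 d2 assms(2) by (auto simp: less_Suc_eq)
  thus ?case using d1(1) d2(1) by (intro exI[of _ "min d1 d2"]) simp
qed



theorem mainTheorem1:
  fixes S :: "nat \<Rightarrow> ('a::linordered_ab_group_add) list set set"
    and m :: nat and C :: "'a list set" and s :: 'a and F :: "'a list \<Rightarrow> 'a \<Rightarrow> 'a"
  assumes "expansion_structure S"
    and "definably_complete S"
    and "locally_o_minimal S"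
    and "C \<in> S m"
    and "closed_in_power m C"
    and "bounded_in_power m C"
    and "0 < s"
    and "definable_family S m C s F"
    and "pointwise_convergent_family C s F"
    and "equi_continuous_family m C s F"
  shows "uniformly_convergent_family C s F"
proof -
  note ES = assms(1) and DC = assms(2) and CS = assms(4) and s0 = assms(7)
  have Csub: "C \<subseteq> tuples m" using assms(5) by (simp add: closed_in_power_def)
  have Clen: "\<And>x. x \<in> C \<Longrightarrow> length x = m" using Csub by (auto simp: tuples_def)
  obtain B where B: "\<forall>x\<in>C. \<forall>i<m. gabs (x ! i) \<le> B" using assms(6) by (auto simp: bounded_in_power_def)
  define Bp where "Bp = max B 0"
  have Bp0: "0 \<le> Bp" by (simp add: Bp_def)
  have ab: "- Bp \<le> Bp" using Bp0 by (meson neg_le_0_iff_le order_trans)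
  have CB: "C \<subseteq> BOX m (- Bp) Bp"
  proof
    fix x assume x: "x \<in> C"
    have "\<forall>i<m. - Bp \<le> x ! i \<and> x ! i \<le> Bp"
    proof (intro allI impI)
      fix i assume "i < m"
      hence "gabs (x ! i) \<le> B" using B x by blast
      moreover have "B \<le> Bp" by (simp add: Bp_def)
      ultimately have "gabs (x ! i) \<le> Bp" by (rule order_trans)
      hence "x ! i \<le> Bp" "- (x ! i) \<le> Bp" by (simp_all add: gabs_le)
      thus "- Bp \<le> x ! i \<and> x ! i \<le> Bp" by (simp add: minus_le_iff)
    qed
    moreover have "x \<in> tuples m" using Csub x by blast
    ultimately show "x \<in> BOX m (- Bp) Bp" unfolding BOX_def by blast
  qed
  show ?thesis unfolding uniformly_convergent_family_def
  proof (intro allI impI)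
    fix e :: 'a assume e: "0 < e"
    obtain e' where e': "e' > 0" "\<forall>x y z. gabs x < e' \<longrightarrow> gabs y < e' \<longrightarrow> gabs z < e' \<longrightarrow> gabs (x + y + z) < e"
      using split3[OF e] by blast
    define G where "G = {x @ [t, F x t] | x t. x \<in> C \<and> 0 < t \<and> t < s}"
    have GS: "G \<in> S (Suc (Suc m))" using assms(8) by (simp add: definable_family_def G_def)
    have Gmem: "\<And>x t v. length x = m \<Longrightarrow> x @ [t, v] \<in> G \<longleftrightarrow> x \<in> C \<and> 0 < t \<and> t < s \<and> v = F x t"
    proof
      fix x t v assume l: "length x = m" and "x @ [t, v] \<in> G"
      then obtain x' t' where h: "x @ [t, v] = x' @ [t', F x' t']" "x' \<in> C" "0 < t'" "t' < s"
        unfolding G_def by blast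
      have "length x' = m" using Clen h(2) by simp
      hence "x = x' \<and> [t, v] = [t', F x' t']" using h(1) l by (simp add: append_eq_append_conv)
      thus "x \<in> C \<and> 0 < t \<and> t < s \<and> v = F x t" using h by simp
    next
      fix x t v assume "length x = m" "x \<in> C \<and> 0 < t \<and> t < s \<and> v = F x t"
      thus "x @ [t, v] \<in> G" unfolding G_def by blast
    qed
    define \<phi>Z where "\<phi>Z = Dis (Nt (Rel C [0..<m])) (Fa (Fa (Imp
      (Cnj (Rel (GTC 0) [Suc m]) (Cnj (Rel LTs [Suc m, m]) (Cnj (Rel (LTC s) [Suc m])
        (Cnj (Rel (GTC 0) [Suc (Suc m)]) (Cnj (Rel LTs [Suc (Suc m), m]) (Rel (LTC s) [Suc (Suc m)]))))))
      (Exi (Exi (Cnj (Rel G ([0..<m] @ [Suc m, Suc (Suc (Suc m))]))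
         (Cnj (Rel G ([0..<m] @ [Suc (Suc m), Suc (Suc (Suc (Suc m)))]))
              (Rel (DISTC e) [Suc (Suc (Suc m)), Suc (Suc (Suc (Suc m)))]))))))))"
    define Z where "Z = setof (Suc m) \<phi>Z"
    have Zmem: "\<And>x u. length x = m \<Longrightarrow> x @ [u] \<in> Z \<longleftrightarrow> (x \<notin> C \<or>
       (\<forall>t t'. 0 < t \<longrightarrow> t < u \<longrightarrow> t < s \<longrightarrow> 0 < t' \<longrightarrow> t' < u \<longrightarrow> t' < s \<longrightarrow> gabs (F x t - F x t') < e))"
    proof -
      fix x :: "'a list" and u :: 'a assume l: "length x = m"
      show "x @ [u] \<in> Z \<longleftrightarrow> (x \<notin> C \<or>
       (\<forall>t t'. 0 < t \<longrightarrow> t < u \<longrightarrow> t < s \<longrightarrow> 0 < t' \<longrightarrow> t' < u \<longrightarrow> t' < s \<longrightarrow> gabs (F x t - F x t') < e))"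
        using l by (simp add: Z_def \<phi>Z_def map_nth_prefix nth_append Gmem) blast
    qed
    have ZS: "Z \<in> S (Suc m)" unfolding Z_def \<phi>Z_def
      by (rule setof_in[OF ES]) (simp add: CS GS der_in'[OF ES] base_in'[OF ES])
    have Zlen: "\<And>zs. zs \<in> Z \<Longrightarrow> length zs = Suc m" by (simp add: Z_def)
    have Zmono: "\<forall>zs u u'. zs @ [u] \<in> Z \<longrightarrow> 0 < u' \<longrightarrow> u' \<le> u \<longrightarrow> zs @ [u'] \<in> Z"
    proof (intro allI impI)
      fix zs u u' assume h: "zs @ [u] \<in> Z" "0 < u'" "u' \<le> u"
      have l: "length zs = m" using Zlen[OF h(1)] by simp
      show "zs @ [u'] \<in> Z" using h(1) h(3) unfolding Zmem[OF l] by (meson less_le_trans)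
    qed
    have Zloc: "\<forall>xs\<in>BOX m (- Bp) Bp. \<exists>u>0. \<exists>d>0. \<forall>xs'\<in>BOX m (- Bp) Bp. near m xs xs' d \<longrightarrow> xs' @ [u] \<in> Z"
    proof
      fix xs assume xsB: "xs \<in> BOX m (- Bp) Bp"
      have lxs: "xs \<in> tuples m" using xsB by (simp add: BOX_def)
      show "\<exists>u>0. \<exists>d>0. \<forall>xs'\<in>BOX m (- Bp) Bp. near m xs xs' d \<longrightarrow> xs' @ [u] \<in> Z"
      proof (cases "xs \<in> C")
        case True
        obtain \<delta> where \<delta>: "\<delta> > 0" "\<forall>t. 0 < t \<and> t < s \<longrightarrow> (\<forall>x'\<in>C. near m xs x' \<delta> \<longrightarrow> gabs (F xs t - F x' t) < e')"
          using assms(10) e'(1) True unfolding equi_continuous_family_def by blast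
        obtain s1 where s1: "s1 > 0" "\<forall>t t'. 0 < t \<and> t < s1 \<and> t < s \<and> 0 < t' \<and> t' < s1 \<and> t' < s \<longrightarrow>
            gabs (F xs t - F xs t') < e'"
          using assms(9) e'(1) True unfolding pointwise_convergent_family_def by blast
        have "\<forall>xs'\<in>BOX m (- Bp) Bp. near m xs xs' \<delta> \<longrightarrow> xs' @ [s1] \<in> Z"
        proof (intro ballI impI)
          fix xs' assume xs': "xs' \<in> BOX m (- Bp) Bp" "near m xs xs' \<delta>"
          have l: "length xs' = m" using xs' by (simp add: BOX_def tuples_def)
          show "xs' @ [s1] \<in> Z" unfolding Zmem[OF l]
          proof (cases "xs' \<in> C")
            case True
            have "\<forall>t t'. 0 < t \<longrightarrow> t < s1 \<longrightarrow> t < s \<longrightarrow> 0 < t' \<longrightarrow> t' < s1 \<longrightarrow> t' < s \<longrightarrow> gabs (F xs' t - F xs' t') < e"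
            proof (intro allI impI)
              fix t t' assume tt: "0 < t" "t < s1" "t < s" "0 < t'" "t' < s1" "t' < s"
              have g1: "gabs (F xs' t - F xs t) < e'" using \<delta>(2) tt True xs'(2) gabs_commute by metis
              have g2: "gabs (F xs t - F xs t') < e'" using s1(2) tt by blast
              have g3: "gabs (F xs t' - F xs' t') < e'" using \<delta>(2) tt True xs'(2) by blast
              have "gabs ((F xs' t - F xs t) + (F xs t - F xs t') + (F xs t' - F xs' t')) < e"
                using e'(2) g1 g2 g3 by blast
              moreover have "(F xs' t - F xs t) + (F xs t - F xs t') + (F xs t' - F xs' t') = F xs' t - F xs' t'"
                by (simp add: algebra_simps)
              ultimately show "gabs (F xs' t - F xs' t') < e" by simp
            qed
            thus "xs' \<notin> C \<or> (\<forall>t t'. 0 < t \<longrightarrow> t < s1 \<longrightarrow> t < s \<longrightarrow> 0 < t' \<longrightarrow> t' < s1 \<longrightarrow> t' < s \<longrightarrow> gabs (F xs' t - F xs' t') < e)"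
              by blast
          qed simp
        qed
        thus ?thesis using \<delta>(1) s1(1) by blast
      next
        case False
        have "open_in_power m (tuples m - C)" using assms(5) by (simp add: closed_in_power_def)
        then obtain lo hi where lh: "\<forall>i<m. xs ! i \<in> oint (lo i) (hi i)"
          "{y \<in> tuples m. \<forall>i<m. y ! i \<in> oint (lo i) (hi i)} \<subseteq> tuples m - C"
          using False lxs unfolding open_in_power_def by blast
        have "\<forall>i<m. \<exists>d>0. \<forall>y. gabs (xs ! i - y) < d \<longrightarrow> y \<in> oint (lo i) (hi i)"
          using lh(1) oint_radius[OF _ s0] by blast
        moreover have "\<forall>i d d'. (\<forall>y. gabs (xs ! i - y) < d \<longrightarrow> y \<in> oint (lo i) (hi i)) \<longrightarrow> 0 < d' \<longrightarrow> d' \<le> d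
            \<longrightarrow> (\<forall>y. gabs (xs ! i - y) < d' \<longrightarrow> y \<in> oint (lo i) (hi i))"
          by (meson less_le_trans)
        ultimately have "\<exists>d>0. \<forall>i<m. \<forall>y. gabs (xs ! i - y) < d \<longrightarrow> y \<in> oint (lo i) (hi i)"
          by (rule finite_min[OF _ _ s0])
        then obtain d where d: "d > 0" "\<forall>i<m. \<forall>y. gabs (xs ! i - y) < d \<longrightarrow> y \<in> oint (lo i) (hi i)"
          by blast
        have "\<forall>xs'\<in>BOX m (- Bp) Bp. near m xs xs' d \<longrightarrow> xs' @ [s] \<in> Z"
        proof (intro ballI impI)
          fix xs' assume xs': "xs' \<in> BOX m (- Bp) Bp" "near m xs xs' d"
          have l: "length xs' = m" using xs' by (simp add: BOX_def tuples_def)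
          have "xs' \<in> {y \<in> tuples m. \<forall>i<m. y ! i \<in> oint (lo i) (hi i)}"
            using xs' d(2) l by (auto simp: near_def tuples_def)
          hence "xs' \<notin> C" using lh(2) by blast
          thus "xs' @ [s] \<in> Z" unfolding Zmem[OF l] by blast
        qed
        thus ?thesis using d(1) s0 by blast
      qed
    qed
    obtain u where u: "u > 0" "\<forall>xs\<in>BOX m (- Bp) Bp. xs @ [u] \<in> Z"
      using compact_box[OF ES DC ab ZS Zmono Zloc] by blast
    have "\<forall>x\<in>C. \<forall>t t'. 0 < t \<and> t < u \<and> t < s \<and> 0 < t' \<and> t' < u \<and> t' < s \<longrightarrow> gabs (F x t - F x t') < e"
    proof (intro ballI allI impI)
      fix x t t' assume x: "x \<in> C" and tt: "0 < t \<and> t < u \<and> t < s \<and> 0 < t' \<and> t' < u \<and> t' < s"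
      have "x @ [u] \<in> Z" using u(2) CB x by blast
      thus "gabs (F x t - F x t') < e" using Zmem[OF Clen[OF x]] x tt by blast
    qed
    thus "\<exists>s'>0. \<forall>x\<in>C. \<forall>t t'. 0 < t \<and> t < s' \<and> t < s \<and> 0 < t' \<and> t' < s' \<and> t' < s \<longrightarrow> gabs (F x t - F x t') < e"
      using u(1) by blast
  qed
qed

end
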